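(* Let $n\ge 2$ and let $P$ be an $n\times n$ permutation matrix which is the leaf matrix of exactly one CNM of size $n$. Then for every $k$ with $2\le k\le n-1$, the $k$-th L-subset of $P$ contains exactly one entry equal to $1$.
   Context: A complete non-ambiguous matrix (CNM) of size $n$ is an $n\times n$ matrix $M=(m_{i,j})$ with entries in $\{0,1\}$ whose support $T=\{(i,j): m_{i,j}=1\}$ (whose elements are called vertices) satisfies: (1) $(1,1)\in T$; (2) for every $p=(i,j)\in T$ with $p\neq(1,1)$, exactly one of the following holds: there is $(i',j)\in T$ with $i'<i$, or there is $(i,j')\in T$ with $j'<j$; (3) every row and every column of $M$ contains at least one vertex; (4) define the parent of $p=(i,j)\neq(1,1)$ to be $(i',j)$ with $i'<i$ maximal if such a vertex exists, and otherwise $(i,j')$ with $j'<j$ maximal; then every vertex is the parent of either zero or exactly two vertices. A vertex with no children is a leaf. The leaf matrix $p(M)$ is obtained from $M$ by replacing all non-leaf vertices by $0$ (it is a permutation matrix). For an $n\times n$ matrix and $k>1$, the $k$-th L-subset is the set of positions $\{(i,j): (i=k \text{ and } j\le k) \text{ or } (j=k \text{ and } i\le k)\}$. *)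

theory Defs
  imports Main
begin

text \<open>An n x n 0/1 matrix is represented by its support: the set of positions
(i,j), 1 <= i,j <= n, whose entry is 1 (rows/columns indexed from 1).\<close>

definition is_01_matrix :: "nat \<Rightarrow> (nat \<times> nat) set \<Rightarrow> bool" where
  "is_01_matrix n T \<longleftrightarrow> T \<subseteq> {1..n} \<times> {1..n}"

definition has_above :: "(nat \<times> nat) set \<Rightarrow> nat \<times> nat \<Rightarrow> bool" where
  "has_above T p \<longleftrightarrow> (\<exists>i'. i' < fst p \<and> (i', snd p) \<in> T)"

definition has_left :: "(nat \<times> nat) set \<Rightarrow> nat \<times> nat \<Rightarrow> bool" where
  "has_left T p \<longleftrightarrow> (\<exists>j'. j' < snd p \<and> (fst p, j') \<in> T)"

definition parent :: "(nat \<times> nat) set \<Rightarrow> nat \<times> nat \<Rightarrow> nat \<times> nat" where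
  "parent T p =
     (if has_above T p
      then (GREATEST i'. i' < fst p \<and> (i', snd p) \<in> T, snd p)
      else (fst p, GREATEST j'. j' < snd p \<and> (fst p, j') \<in> T))"

definition children :: "(nat \<times> nat) set \<Rightarrow> nat \<times> nat \<Rightarrow> (nat \<times> nat) set" where
  "children T p = {q \<in> T. q \<noteq> (1,1) \<and> parent T q = p}"

definition is_CNM :: "nat \<Rightarrow> (nat \<times> nat) set \<Rightarrow> bool" where
  "is_CNM n T \<longleftrightarrow>
     is_01_matrix n T \<and>
     (1,1) \<in> T \<and>
     (\<forall>p\<in>T. p \<noteq> (1,1) \<longrightarrow> (has_above T p \<noteq> has_left T p)) \<and>
     (\<forall>i\<in>{1..n}. \<exists>j. (i,j) \<in> T) \<and>
     (\<forall>j\<in>{1..n}. \<exists>i. (i,j) \<in> T) \<and>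
     (\<forall>p\<in>T. card (children T p) = 0 \<or> card (children T p) = 2)"

definition leaf_matrix :: "(nat \<times> nat) set \<Rightarrow> (nat \<times> nat) set" where
  "leaf_matrix T = {p \<in> T. children T p = {}}"

definition is_perm_matrix :: "nat \<Rightarrow> (nat \<times> nat) set \<Rightarrow> bool" where
  "is_perm_matrix n P \<longleftrightarrow> is_01_matrix n P \<and>
     (\<forall>i\<in>{1..n}. \<exists>!j. (i,j) \<in> P) \<and> (\<forall>j\<in>{1..n}. \<exists>!i. (i,j) \<in> P)"

definition L_subset :: "nat \<Rightarrow> (nat \<times> nat) set" where
  "L_subset k = {(i,j). (i = k \<and> 1 \<le> j \<and> j \<le> k) \<or> (j = k \<and> 1 \<le> i \<and> i \<le> k)}"

end

theory Submission
  imports Defs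
begin


definition rightof :: "(nat \<times> nat) set \<Rightarrow> nat \<times> nat \<Rightarrow> bool" where
  "rightof T p \<longleftrightarrow> (\<exists>j. snd p < j \<and> (fst p, j) \<in> T)"
definition belowof :: "(nat \<times> nat) set \<Rightarrow> nat \<times> nat \<Rightarrow> bool" where
  "belowof T p \<longleftrightarrow> (\<exists>i. fst p < i \<and> (i, snd p) \<in> T)"

definition excl :: "(nat \<times> nat) set \<Rightarrow> bool" where
  "excl T \<longleftrightarrow> (\<forall>p\<in>T. p \<noteq> (1,1) \<longrightarrow> (has_above T p \<noteq> has_left T p))"

definition CR :: "(nat \<times> nat) set \<Rightarrow> nat \<times> nat \<Rightarrow> (nat \<times> nat) set" where
  "CR T p = (if rightof T p then {(fst p, LEAST j. snd p < j \<and> (fst p, j) \<in> T)} else {})"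
definition CD :: "(nat \<times> nat) set \<Rightarrow> nat \<times> nat \<Rightarrow> (nat \<times> nat) set" where
  "CD T p = (if belowof T p then {(LEAST i. fst p < i \<and> (i, snd p) \<in> T, snd p)} else {})"

lemma greatest_eq_nat:
  fixes P :: "nat \<Rightarrow> bool"
  assumes "P x" "\<And>y. P y \<Longrightarrow> y \<le> x" shows "Greatest P = x"
  using assms by (simp add: Greatest_equality)

lemma children_sub:
  assumes ex: "excl T" and q: "q \<in> children T p"
  shows "q \<in> CR T p \<union> CD T p"
proof -
  from q have qT: "q \<in> T" and q1: "q \<noteq> (1,1)" and pq: "parent T q = p"
    by (auto simp: children_def)
  obtain a b where qab: "q = (a,b)" by (cases q)
  show ?thesis
  proof (cases "has_above T q")
    case True
    let ?P = "\<lambda>i'. i' < a \<and> (i', b) \<in> T"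
    from True obtain i0 where "?P i0" by (auto simp: has_above_def qab)
    have bnd: "\<And>y. ?P y \<Longrightarrow> y \<le> a" by auto
    have G: "?P (Greatest ?P)" using GreatestI_nat[of ?P i0 a] \<open>?P i0\<close> bnd by blast
    have Gle: "\<And>y. ?P y \<Longrightarrow> y \<le> Greatest ?P" using Greatest_le_nat[of ?P _ a] bnd by blast
    have p: "p = (Greatest ?P, b)" using pq True by (simp add: parent_def qab)
    have bel: "belowof T p" using G qT by (auto simp: belowof_def p qab)
    have "(LEAST i. fst p < i \<and> (i, snd p) \<in> T) = a"
    proof (rule Least_equality)
      show "fst p < a \<and> (a, snd p) \<in> T" using G qT by (simp add: p qab)
      fix y assume y: "fst p < y \<and> (y, snd p) \<in> T"
      show "a \<le> y"
      proof (rule ccontr)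
        assume "\<not> a \<le> y"
        then have "?P y" using y by (simp add: p)
        then have "y \<le> Greatest ?P" by (rule Gle)
        with y show False by (simp add: p)
      qed
    qed
    then have "q \<in> CD T p" using bel by (simp add: CD_def p qab)
    then show ?thesis by simp
  next
    case False
    then have hl: "has_left T q" using ex qT q1 by (auto simp: excl_def)
    let ?P = "\<lambda>j'. j' < b \<and> (a, j') \<in> T"
    from hl obtain j0 where "?P j0" by (auto simp: has_left_def qab)
    have bnd: "\<And>y. ?P y \<Longrightarrow> y \<le> b" by auto
    have G: "?P (Greatest ?P)" using GreatestI_nat[of ?P j0 b] \<open>?P j0\<close> bnd by blast
    have Gle: "\<And>y. ?P y \<Longrightarrow> y \<le> Greatest ?P" using Greatest_le_nat[of ?P _ b] bnd by blast
    have p: "p = (a, Greatest ?P)" using pq False by (simp add: parent_def qab)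
    have bel: "rightof T p" using G qT by (auto simp: rightof_def p qab)
    have "(LEAST j. snd p < j \<and> (fst p, j) \<in> T) = b"
    proof (rule Least_equality)
      show "snd p < b \<and> (fst p, b) \<in> T" using G qT by (simp add: p qab)
      fix y assume y: "snd p < y \<and> (fst p, y) \<in> T"
      show "b \<le> y"
      proof (rule ccontr)
        assume "\<not> b \<le> y"
        then have "?P y" using y by (simp add: p)
        then have "y \<le> Greatest ?P" by (rule Gle)
        with y show False by (simp add: p)
      qed
    qed
    then have "q \<in> CR T p" using bel by (simp add: CR_def p qab)
    then show ?thesis by simp
  qed
qed

lemma CR_sub:
  assumes ex: "excl T" and pT: "p \<in> T" and p1: "1 \<le> snd p" and q: "q \<in> CR T p"
  shows "q \<in> children T p"
proof -
  let ?Q = "\<lambda>j. snd p < j \<and> (fst p, j) \<in> T"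
  have r: "rightof T p" and qd: "q = (fst p, Least ?Q)" using q by (auto simp: CR_def split: if_splits)
  from r obtain j where "?Q j" by (auto simp: rightof_def)
  then have L: "?Q (Least ?Q)" by (rule LeastI)
  have Lle: "\<And>y. ?Q y \<Longrightarrow> Least ?Q \<le> y" by (rule Least_le)
  have qT: "q \<in> T" using L qd by simp
  have q1: "q \<noteq> (1,1)" using L p1 qd by auto
  have hl: "has_left T q" using pT L by (auto simp: has_left_def qd intro!: exI[of _ "snd p"])
  then have nha: "\<not> has_above T q" using ex qT q1 by (auto simp: excl_def)
  have "(GREATEST j'. j' < Least ?Q \<and> (fst p, j') \<in> T) = snd p"
  proof (rule greatest_eq_nat)
    show "snd p < Least ?Q \<and> (fst p, snd p) \<in> T" using L pT by simp
    fix y assume y: "y < Least ?Q \<and> (fst p, y) \<in> T"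
    show "y \<le> snd p"
    proof (rule ccontr)
      assume "\<not> y \<le> snd p"
      then have "?Q y" using y by simp
      then have "Least ?Q \<le> y" by (rule Lle)
      with y show False by simp
    qed
  qed
  then have "parent T q = p" using nha by (simp add: parent_def qd)
  then show ?thesis using qT q1 by (simp add: children_def)
qed

lemma CD_sub:
  assumes ex: "excl T" and pT: "p \<in> T" and p1: "1 \<le> fst p" and q: "q \<in> CD T p"
  shows "q \<in> children T p"
proof -
  let ?Q = "\<lambda>i. fst p < i \<and> (i, snd p) \<in> T"
  have r: "belowof T p" and qd: "q = (Least ?Q, snd p)" using q by (auto simp: CD_def split: if_splits)
  from r obtain j where "?Q j" by (auto simp: belowof_def)
  then have L: "?Q (Least ?Q)" by (rule LeastI)
  have Lle: "\<And>y. ?Q y \<Longrightarrow> Least ?Q \<le> y" by (rule Least_le)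
  have qT: "q \<in> T" using L qd by simp
  have q1: "q \<noteq> (1,1)" using L p1 qd by auto
  have ha: "has_above T q" using pT L by (auto simp: has_above_def qd intro!: exI[of _ "fst p"])
  have "(GREATEST j'. j' < Least ?Q \<and> (j', snd p) \<in> T) = fst p"
  proof (rule greatest_eq_nat)
    show "fst p < Least ?Q \<and> (fst p, snd p) \<in> T" using L pT by simp
    fix y assume y: "y < Least ?Q \<and> (y, snd p) \<in> T"
    show "y \<le> fst p"
    proof (rule ccontr)
      assume "\<not> y \<le> fst p"
      then have "?Q y" using y by simp
      then have "Least ?Q \<le> y" by (rule Lle)
      with y show False by simp
    qed
  qed
  then have "parent T q = p" using ha by (simp add: parent_def qd)
  then show ?thesis using qT q1 by (simp add: children_def)
qed

lemma children_eq:
  assumes "excl T" "p \<in> T" "1 \<le> fst p" "1 \<le> snd p"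
  shows "children T p = CR T p \<union> CD T p"
  using children_sub[OF assms(1)] CR_sub[OF assms(1,2,4)] CD_sub[OF assms(1,2,3)] by blast

lemma CR_CD_disj: "CR T p \<inter> CD T p = {}"
proof -
  { fix q assume a: "q \<in> CR T p" "q \<in> CD T p"
    then have r: "rightof T p" and b: "belowof T p" by (auto simp: CR_def CD_def split: if_splits)
    from r obtain j where "snd p < j \<and> (fst p, j) \<in> T" by (auto simp: rightof_def)
    then have "snd p < (LEAST j. snd p < j \<and> (fst p, j) \<in> T)" by (metis (mono_tags, lifting) LeastI)
    with a have False by (auto simp: CR_def CD_def split: if_splits) }
  then show ?thesis by blast
qed

lemma card_children:
  assumes "excl T" "p \<in> T" "1 \<le> fst p" "1 \<le> snd p"
  shows "card (children T p) = (if rightof T p then 1 else 0) + (if belowof T p then 1 else 0)"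
proof -
  have "card (children T p) = card (CR T p) + card (CD T p)"
    using children_eq[OF assms] CR_CD_disj[of T p]
    by (simp add: card_Un_disjoint CR_def CD_def)
  then show ?thesis by (simp add: CR_def CD_def)
qed

lemma children_empty:
  assumes "excl T" "p \<in> T" "1 \<le> fst p" "1 \<le> snd p"
  shows "children T p = {} \<longleftrightarrow> \<not> rightof T p \<and> \<not> belowof T p"
  using children_eq[OF assms] by (auto simp: CR_def CD_def)

definition cnm' :: "nat \<Rightarrow> (nat \<times> nat) set \<Rightarrow> bool" where
  "cnm' n T \<longleftrightarrow> is_01_matrix n T \<and> (1,1) \<in> T \<and> excl T \<and>
     (\<forall>i\<in>{1..n}. \<exists>j. (i,j) \<in> T) \<and> (\<forall>j\<in>{1..n}. \<exists>i. (i,j) \<in> T) \<and>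
     (\<forall>p\<in>T. rightof T p \<longleftrightarrow> belowof T p)"

lemma cnm_iff: "is_CNM n T \<longleftrightarrow> cnm' n T"
proof
  assume A: "is_CNM n T"
  then have ex: "excl T" by (simp add: is_CNM_def excl_def)
  have "\<forall>p\<in>T. rightof T p \<longleftrightarrow> belowof T p"
  proof
    fix p assume pT: "p \<in> T"
    then have g: "1 \<le> fst p" "1 \<le> snd p" using A by (auto simp: is_CNM_def is_01_matrix_def)
    have "card (children T p) = 0 \<or> card (children T p) = 2" using A pT by (simp add: is_CNM_def)
    then show "rightof T p \<longleftrightarrow> belowof T p" using card_children[OF ex pT g]
      by (cases "rightof T p"; cases "belowof T p") simp_all
  qed
  then show "cnm' n T" using A ex by (simp add: is_CNM_def cnm'_def)
next
  assume A: "cnm' n T"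
  then have ex: "excl T" by (simp add: cnm'_def)
  have "\<forall>p\<in>T. card (children T p) = 0 \<or> card (children T p) = 2"
  proof
    fix p assume pT: "p \<in> T"
    then have g: "1 \<le> fst p" "1 \<le> snd p" using A by (auto simp: cnm'_def is_01_matrix_def)
    have "rightof T p \<longleftrightarrow> belowof T p" using A pT by (simp add: cnm'_def)
    then show "card (children T p) = 0 \<or> card (children T p) = 2"
      using card_children[OF ex pT g] by (cases "rightof T p"; cases "belowof T p") simp_all
  qed
  then show "is_CNM n T" using A by (simp add: is_CNM_def cnm'_def excl_def)
qed

lemma leaf_eq:
  assumes "cnm' n T" shows "leaf_matrix T = {p\<in>T. \<not> rightof T p}"
proof -
  have "\<And>p. p \<in> T \<Longrightarrow> children T p = {} \<longleftrightarrow> \<not> rightof T p"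
  proof -
    fix p assume pT: "p \<in> T"
    then have g: "1 \<le> fst p" "1 \<le> snd p" using assms by (auto simp: cnm'_def is_01_matrix_def)
    show "children T p = {} \<longleftrightarrow> \<not> rightof T p"
      using children_empty[of T p] g pT assms by (auto simp: cnm'_def)
  qed
  then show ?thesis by (auto simp: leaf_matrix_def)
qed



definition tr :: "(nat \<times> nat) set \<Rightarrow> (nat \<times> nat) set" where
  "tr T = prod.swap ` T"

lemma mem_tr[simp]: "(a,b) \<in> tr T \<longleftrightarrow> (b,a) \<in> T"
  by (force simp: tr_def)

lemma tr_tr[simp]: "tr (tr T) = T"
  by (auto simp: tr_def image_image)

lemma tr_inj: "tr A = tr B \<Longrightarrow> A = B"
  by (metis tr_tr)

lemma ha_tr: "has_above (tr T) (a,b) \<longleftrightarrow> has_left T (b,a)"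
  by (simp add: has_above_def has_left_def)
lemma hl_tr: "has_left (tr T) (a,b) \<longleftrightarrow> has_above T (b,a)"
  by (simp add: has_above_def has_left_def)
lemma ro_tr: "rightof (tr T) (a,b) \<longleftrightarrow> belowof T (b,a)"
  by (simp add: rightof_def belowof_def)
lemma bo_tr: "belowof (tr T) (a,b) \<longleftrightarrow> rightof T (b,a)"
  by (simp add: rightof_def belowof_def)

lemma cnm_tr: assumes "cnm' n T" shows "cnm' n (tr T)"
proof -
  have g: "is_01_matrix n (tr T)" using assms by (auto simp: cnm'_def is_01_matrix_def)
  have e: "excl (tr T)"
  proof (unfold excl_def, intro ballI impI)
    fix p assume "p \<in> tr T" "p \<noteq> (1,1)"
    then show "has_above (tr T) p \<noteq> has_left (tr T) p" using assms
      by (cases p) (auto simp: cnm'_def excl_def ha_tr hl_tr)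
  qed
  have r: "\<forall>p\<in>tr T. rightof (tr T) p \<longleftrightarrow> belowof (tr T) p"
  proof
    fix p assume "p \<in> tr T"
    then show "rightof (tr T) p \<longleftrightarrow> belowof (tr T) p" using assms
      by (cases p) (auto simp: cnm'_def ro_tr bo_tr)
  qed
  show ?thesis using g e r assms by (simp add: cnm'_def)
qed

definition leaves :: "(nat \<times> nat) set \<Rightarrow> (nat \<times> nat) set" where
  "leaves T = {p\<in>T. \<not> rightof T p}"

lemma leaves_tr: assumes "cnm' n T" shows "leaves (tr T) = tr (leaves T)"
proof -
  { fix a b
    have "(a,b) \<in> leaves (tr T) \<longleftrightarrow> (b,a) \<in> T \<and> \<not> belowof T (b,a)"
      by (simp add: leaves_def ro_tr)
    also have "\<dots> \<longleftrightarrow> (b,a) \<in> T \<and> \<not> rightof T (b,a)" using assms by (auto simp: cnm'_def)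
    finally have "(a,b) \<in> leaves (tr T) \<longleftrightarrow> (a,b) \<in> tr (leaves T)" by (simp add: leaves_def) }
  then show ?thesis by auto
qed

lemma perm_tr: assumes "is_perm_matrix n P" shows "is_perm_matrix n (tr P)"
  using assms unfolding is_perm_matrix_def is_01_matrix_def by auto

definition good :: "nat \<Rightarrow> (nat \<times> nat) set \<Rightarrow> (nat \<times> nat) set \<Rightarrow> bool" where
  "good n T P \<longleftrightarrow> cnm' n T \<and> leaves T = P \<and> is_perm_matrix n P"

lemma good_tr: assumes "good n T P" shows "good n (tr T) (tr P)"
  using assms cnm_tr[of n T] leaves_tr[of n T] perm_tr[of n P] by (simp add: good_def)

lemma L_tr: "tr (L_subset k) = L_subset k"
  by (auto simp: L_subset_def)

lemma card_tr: "card (tr A) = card A"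
  unfolding tr_def by (simp add: card_image swap_inj_on)

lemma tr_Int: "tr (A \<inter> B) = tr A \<inter> tr B"
  by auto



lemma good_grid: "good n T P \<Longrightarrow> (i,j) \<in> T \<Longrightarrow> 1 \<le> i \<and> i \<le> n \<and> 1 \<le> j \<and> j \<le> n"
  unfolding good_def cnm'_def is_01_matrix_def by (auto simp del: One_nat_def)

lemma good_fin: "good n T P \<Longrightarrow> finite T"
  by (auto simp: good_def cnm'_def is_01_matrix_def intro: finite_subset)

lemma good_PT: "good n T P \<Longrightarrow> p \<in> P \<Longrightarrow> p \<in> T \<and> \<not> rightof T p \<and> \<not> belowof T p"
  by (auto simp: good_def leaves_def cnm'_def)

lemma good_P_uniq_row: "good n T P \<Longrightarrow> (i,j) \<in> P \<Longrightarrow> (i,j') \<in> P \<Longrightarrow> j = j'"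
  unfolding good_def is_perm_matrix_def is_01_matrix_def by blast

lemma good_P_uniq_col: "good n T P \<Longrightarrow> (i,j) \<in> P \<Longrightarrow> (i',j) \<in> P \<Longrightarrow> i = i'"
  unfolding good_def is_perm_matrix_def is_01_matrix_def by blast

lemma good_P_row: "good n T P \<Longrightarrow> 1 \<le> i \<Longrightarrow> i \<le> n \<Longrightarrow> \<exists>j. (i,j) \<in> P"
  unfolding good_def is_perm_matrix_def by auto

lemma good_P_col: "good n T P \<Longrightarrow> 1 \<le> j \<Longrightarrow> j \<le> n \<Longrightarrow> \<exists>i. (i,j) \<in> P"
  unfolding good_def is_perm_matrix_def by auto

lemma good_rightbelow: "good n T P \<Longrightarrow> p \<in> T \<Longrightarrow> rightof T p \<longleftrightarrow> belowof T p"
  by (auto simp: good_def cnm'_def)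

lemma good_excl: "good n T P \<Longrightarrow> p \<in> T \<Longrightarrow> p \<noteq> (1,1) \<Longrightarrow> has_above T p \<noteq> has_left T p"
  by (auto simp: good_def cnm'_def excl_def)

lemma good_root: "good n T P \<Longrightarrow> (1,1) \<in> T"
  by (auto simp: good_def cnm'_def)

lemma row_last:
  assumes g: "good n T P" and ij: "(i,j) \<in> T" and ij': "(i,j') \<in> P"
  shows "j \<le> j'"
proof -
  let ?S = "{j. (i,j) \<in> T}"
  have fin: "finite ?S"
  proof -
    have "?S \<subseteq> {1..n}" using good_grid[OF g] by auto
    then show ?thesis by (rule finite_subset) simp
  qed
  have ne: "j \<in> ?S" using ij by simp
  let ?m = "Max ?S"
  have mT: "(i, ?m) \<in> T" using Max_in[OF fin] ne by auto
  have "\<not> rightof T (i, ?m)"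
  proof
    assume "rightof T (i, ?m)"
    then obtain j2 where "?m < j2" "(i,j2) \<in> T" by (auto simp: rightof_def)
    then show False using Max_ge[OF fin, of j2] by auto
  qed
  then have "(i, ?m) \<in> P" using g mT by (auto simp: good_def leaves_def)
  then have "?m = j'" using good_P_uniq_row[OF g _ ij'] by blast
  then show ?thesis using Max_ge[OF fin ne] by simp
qed

lemma col_last:
  assumes g: "good n T P" and ij: "(i,j) \<in> T" and ij': "(i',j) \<in> P"
  shows "i \<le> i'"
  using row_last[OF good_tr[OF g], of j i i'] ij ij' by simp

lemma root_notP: assumes g: "good n T P" and n2: "2 \<le> n" shows "(1,1) \<notin> P"
proof
  assume r: "(1,1) \<in> P"
  have "(2::nat) \<in> {1..n}" using n2 by simp
  then obtain j where "(2,j) \<in> T" using g unfolding good_def cnm'_def by blast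
  let ?Q = "\<lambda>j. (2,j) \<in> T"
  have f: "(2, Least ?Q) \<in> T" by (rule LeastI[of ?Q j]) fact
  have nl: "\<not> has_left T (2, Least ?Q)"
    by (auto simp: has_left_def dest: not_less_Least)
  then have "has_above T (2, Least ?Q)" using good_excl[OF g f] by auto
  then obtain i' where i': "i' < 2" "(i', Least ?Q) \<in> T" by (auto simp: has_above_def)
  then have "i' = 1" using good_grid[OF g i'(2)] by auto
  then have "Least ?Q \<le> 1" using row_last[OF g _ r] i' by auto
  then have "Least ?Q = 1" using good_grid[OF g f] by auto
  then have "(2,1) \<in> T" using f by simp
  then have "2 \<le> (1::nat)" using col_last[OF g _ r] by blast
  then show False by simp
qed

lemma move:
  assumes g: "good n T P" and xT: "x \<in> T" and yT: "y \<notin> T"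
    and yg: "1 \<le> fst y" "fst y \<le> n" "1 \<le> snd y" "snd y \<le> n"
    and x1: "x \<noteq> (1,1)" and xr: "rightof T x" and xb: "belowof T x"
    and yr: "(fst y, jr) \<in> T" "snd y < jr" "(fst y, jr) \<noteq> x"
    and yb: "(ib, snd y) \<in> T" "fst y < ib" "(ib, snd y) \<noteq> x"
    and ex': "excl (insert y (T - {x}))"
  shows "good n (insert y (T - {x})) P"
proof -
  let ?T' = "insert y (T - {x})"
  have rpres: "rightof ?T' p \<longleftrightarrow> rightof T p" if p: "p \<in> T - {x}" for p
  proof
    assume "rightof ?T' p"
    then obtain j where j: "snd p < j" "(fst p, j) \<in> ?T'" by (auto simp: rightof_def)
    show "rightof T p"
    proof (cases "(fst p, j) = y")
      case True
      then show ?thesis using yr j by (auto simp: rightof_def intro!: exI[of _ jr])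
    next
      case False
      then show ?thesis using j by (auto simp: rightof_def)
    qed
  next
    assume "rightof T p"
    then obtain j where j: "snd p < j" "(fst p, j) \<in> T" by (auto simp: rightof_def)
    show "rightof ?T' p"
    proof (cases "(fst p, j) = x")
      case True
      from xr obtain j2 where "snd x < j2" "(fst x, j2) \<in> T" by (auto simp: rightof_def)
      then show ?thesis using True j by (auto simp: rightof_def intro!: exI[of _ j2])
    next
      case False
      then show ?thesis using j by (auto simp: rightof_def)
    qed
  qed
  have bpres: "belowof ?T' p \<longleftrightarrow> belowof T p" if p: "p \<in> T - {x}" for p
  proof
    assume "belowof ?T' p"
    then obtain i where i: "fst p < i" "(i, snd p) \<in> ?T'" by (auto simp: belowof_def)
    show "belowof T p"
    proof (cases "(i, snd p) = y")
      case True
      then show ?thesis using yb i by (auto simp: belowof_def intro!: exI[of _ ib])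
    next
      case False
      then show ?thesis using i by (auto simp: belowof_def)
    qed
  next
    assume "belowof T p"
    then obtain i where i: "fst p < i" "(i, snd p) \<in> T" by (auto simp: belowof_def)
    show "belowof ?T' p"
    proof (cases "(i, snd p) = x")
      case True
      from xb obtain i2 where "fst x < i2" "(i2, snd x) \<in> T" by (auto simp: belowof_def)
      then show ?thesis using True i by (auto simp: belowof_def intro!: exI[of _ i2])
    next
      case False
      then show ?thesis using i by (auto simp: belowof_def)
    qed
  qed
  have yrr: "rightof ?T' y" using yr by (auto simp: rightof_def intro!: exI[of _ jr])
  have ybb: "belowof ?T' y" using yb by (auto simp: belowof_def intro!: exI[of _ ib])
  have grid: "is_01_matrix n ?T'" using g yg by (cases y) (auto simp: good_def cnm'_def is_01_matrix_def)
  have root: "(1,1) \<in> ?T'" using good_root[OF g] x1 by auto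
  have rows: "\<forall>i\<in>{1..n}. \<exists>j. (i,j) \<in> ?T'"
  proof
    fix i assume "i \<in> {1..n}"
    then obtain j where j: "(i,j) \<in> T" using g unfolding good_def cnm'_def by blast
    show "\<exists>j. (i,j) \<in> ?T'"
    proof (cases "(i,j) = x")
      case True
      from xr obtain j2 where "snd x < j2" "(fst x, j2) \<in> T" by (auto simp: rightof_def)
      then show ?thesis using True by (intro exI[of _ j2]) auto
    next
      case False then show ?thesis using j by auto
    qed
  qed
  have cols: "\<forall>j\<in>{1..n}. \<exists>i. (i,j) \<in> ?T'"
  proof
    fix j assume "j \<in> {1..n}"
    then obtain i where i: "(i,j) \<in> T" using g unfolding good_def cnm'_def by blast
    show "\<exists>i. (i,j) \<in> ?T'"
    proof (cases "(i,j) = x")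
      case True
      from xb obtain i2 where "fst x < i2" "(i2, snd x) \<in> T" by (auto simp: belowof_def)
      then show ?thesis using True by (intro exI[of _ i2]) auto
    next
      case False then show ?thesis using i by auto
    qed
  qed
  have rb: "\<forall>p\<in>?T'. rightof ?T' p \<longleftrightarrow> belowof ?T' p"
  proof
    fix p assume p: "p \<in> ?T'"
    show "rightof ?T' p \<longleftrightarrow> belowof ?T' p"
    proof (cases "p = y")
      case True then show ?thesis using yrr ybb by simp
    next
      case False
      then have "p \<in> T - {x}" using p by simp
      then show ?thesis using rpres bpres good_rightbelow[OF g] by auto
    qed
  qed
  have c: "cnm' n ?T'" using grid root ex' rows cols rb by (simp add: cnm'_def)
  have "leaves ?T' = leaves T"
  proof -
    have "leaves ?T' = {p \<in> T - {x}. \<not> rightof ?T' p}" using yrr yT by (auto simp: leaves_def)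
    also have "\<dots> = {p \<in> T - {x}. \<not> rightof T p}" using rpres by auto
    also have "\<dots> = leaves T" using xr by (auto simp: leaves_def)
    finally show ?thesis .
  qed
  then show ?thesis using c g by (simp add: good_def)
qed



lemma ha_ir: "has_above (insert y (T-{x})) (a,b) \<longleftrightarrow>
   (\<exists>i'<a. (i',b) \<in> T \<and> (i',b) \<noteq> x) \<or> (snd y = b \<and> fst y < a)"
  by (cases y) (auto simp: has_above_def)
lemma hl_ir: "has_left (insert y (T-{x})) (a,b) \<longleftrightarrow>
   (\<exists>j'<b. (a,j') \<in> T \<and> (a,j') \<noteq> x) \<or> (fst y = a \<and> snd y < b)"
  by (cases y) (auto simp: has_left_def)

lemma excl_ir:
  assumes "\<And>a b. (a,b) \<in> insert y (T-{x}) \<Longrightarrow> (a,b) \<noteq> (1,1) \<Longrightarrow>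
     has_above (insert y (T-{x})) (a,b) \<noteq> has_left (insert y (T-{x})) (a,b)"
  shows "excl (insert y (T-{x}))"
proof (unfold excl_def, intro ballI impI)
  fix p assume "p \<in> insert y (T-{x})" "p \<noteq> (1,1)"
  then show "has_above (insert y (T-{x})) p \<noteq> has_left (insert y (T-{x})) p"
    using assms[of "fst p" "snd p"] by simp
qed

lemma first_above:
  assumes g: "good n T P" and p: "(a,b) \<in> T" "(a,b) \<noteq> (1,1)" and nl: "\<And>j. j < b \<Longrightarrow> (a,j) \<notin> T"
  shows "\<exists>i'<a. (i',b) \<in> T"
proof -
  have "\<not> has_left T (a,b)" using nl by (auto simp: has_left_def)
  then have "has_above T (a,b)" using good_excl[OF g p] by auto
  then show ?thesis by (auto simp: has_above_def)
qed

lemma first_left: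
  assumes g: "good n T P" and p: "(a,b) \<in> T" "(a,b) \<noteq> (1,1)" and nl: "\<And>i. i < a \<Longrightarrow> (i,b) \<notin> T"
  shows "\<exists>j'<b. (a,j') \<in> T"
proof -
  have "\<not> has_above T (a,b)" using nl by (auto simp: has_above_def)
  then have "has_left T (a,b)" using good_excl[OF g p] by auto
  then show ?thesis by (auto simp: has_left_def)
qed

lemma half:
  assumes g: "good n T P" and k2: "2 \<le> k" and kn: "k \<le> n"
    and i0: "1 \<le> i0" "i0 < k" and j0: "1 \<le> j0" "j0 < k"
    and F1r: "\<And>i j. (i,j) \<in> T \<Longrightarrow> i < k \<Longrightarrow> i \<noteq> i0 \<Longrightarrow> j < k"
    and F1c: "\<And>i j. (i,j) \<in> T \<Longrightarrow> j < k \<Longrightarrow> j \<noteq> j0 \<Longrightarrow> i < k"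
    and rowk: "\<And>j. (k,j) \<in> P \<Longrightarrow> k < j" and colk: "\<And>i. (i,k) \<in> P \<Longrightarrow> k < i"
    and i0l: "\<And>j. (i0,j) \<in> P \<Longrightarrow> k < j" and j0l: "\<And>i. (i,j0) \<in> P \<Longrightarrow> k < i"
    and cs: "k \<le> (LEAST j. (k,j) \<in> T) \<or> ((LEAST j. (k,j) \<in> T) < k \<and> (LEAST i. (i,k) \<in> T) < k)"
  shows "\<exists>T'. good n T' P \<and> T' \<noteq> T"
proof -
  obtain jk where jkP: "(k,jk) \<in> P" using good_P_row[OF g, of k] k2 kn by auto
  have jk: "k < jk" "(k,jk) \<in> T" using rowk[OF jkP] good_PT[OF g jkP] by auto
  obtain ik where ikP: "(ik,k) \<in> P" using good_P_col[OF g, of k] k2 kn by auto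
  have ik: "k < ik" "(ik,k) \<in> T" using colk[OF ikP] good_PT[OF g ikP] by auto
  obtain ij0 where ij0P: "(ij0,j0) \<in> P" using good_P_col[OF g, of j0] j0 kn by auto
  have ij0: "k < ij0" "(ij0,j0) \<in> T" using j0l[OF ij0P] good_PT[OF g ij0P] by auto
  obtain ji0 where ji0P: "(i0,ji0) \<in> P" using good_P_row[OF g, of i0] i0 kn by auto
  have ji0: "k < ji0" "(i0,ji0) \<in> T" using i0l[OF ji0P] good_PT[OF g ji0P] by auto
  have ikn: "ij0 \<le> n" using good_grid[OF g ij0(2)] by simp
  have colabove: "\<exists>i'<k. (i',j0) \<in> T"
  proof -
    let ?Q = "\<lambda>i. (i,j0) \<in> T"
    have tT: "(Least ?Q, j0) \<in> T" by (rule LeastI[of ?Q ij0]) (simp add: ij0)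
    have tle: "\<And>i. (i,j0) \<in> T \<Longrightarrow> Least ?Q \<le> i" by (rule Least_le)
    show ?thesis
    proof (cases "Least ?Q < k")
      case True then show ?thesis using tT by blast
    next
      case False
      show ?thesis
      proof (cases "j0 = 1")
        case True then show ?thesis using good_root[OF g] k2 by (intro exI[of _ 1]) auto
      next
        case False
        have "\<exists>j'<j0. (Least ?Q, j') \<in> T"
          by (rule first_left[OF g tT]) (use False in auto, use tle in fastforce)
        then obtain j' where "j' < j0" "(Least ?Q, j') \<in> T" by blast
        then have "Least ?Q < k" using F1c j0 by auto
        with \<open>\<not> Least ?Q < k\<close> show ?thesis by simp
      qed
    qed
  qed
  have rowleft: "\<exists>j'<k. (i0,j') \<in> T"
  proof -
    let ?Q = "\<lambda>j. (i0,j) \<in> T"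
    have tT: "(i0, Least ?Q) \<in> T" by (rule LeastI[of ?Q ji0]) (simp add: ji0)
    have tle: "\<And>j. (i0,j) \<in> T \<Longrightarrow> Least ?Q \<le> j" by (rule Least_le)
    show ?thesis
    proof (cases "Least ?Q < k")
      case True then show ?thesis using tT by blast
    next
      case False
      show ?thesis
      proof (cases "i0 = 1")
        case True then show ?thesis using good_root[OF g] k2 by (intro exI[of _ 1]) auto
      next
        case False
        have "\<exists>i'<i0. (i', Least ?Q) \<in> T"
          by (rule first_above[OF g tT]) (use False in auto, use tle in fastforce)
        then obtain i' where "i' < i0" "(i', Least ?Q) \<in> T" by blast
        then have "Least ?Q < k" using F1r i0 by auto
        with \<open>\<not> Least ?Q < k\<close> show ?thesis by simp
      qed
    qed
  qed
  define s where "s = (LEAST j. (k,j) \<in> T)"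
  have sT: "(k,s) \<in> T" unfolding s_def by (rule LeastI[of _ jk]) (simp add: jk)
  have sle: "\<And>j. (k,j) \<in> T \<Longrightarrow> s \<le> j" unfolding s_def by (rule Least_le)
  define t where "t = (LEAST i. (i,k) \<in> T)"
  have tT: "(t,k) \<in> T" unfolding t_def by (rule LeastI[of _ ik]) (simp add: ik)
  have tle: "\<And>i. (i,k) \<in> T \<Longrightarrow> t \<le> i" unfolding t_def by (rule Least_le)
  have k1: "(k,s) \<noteq> (1,1)" using k2 by auto
  have sabove: "\<exists>i'<k. (i',s) \<in> T"
    by (rule first_above[OF g sT k1]) (use sle in fastforce)
  have cs': "k \<le> s \<or> (s < k \<and> t < k)" using cs by (simp add: s_def t_def)
  show ?thesis
  proof (cases "k < s")
    case True
    obtain i' where i': "i' < k" "(i',s) \<in> T" using sabove by blast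
    have "i' = i0" using F1r[OF i'(2) i'(1)] True by auto
    then have xT: "(i0,s) \<in> T" using i' by simp
    let ?x = "(i0,s)" and ?y = "(k,j0)"
    let ?T' = "insert ?y (T - {?x})"
    have yT: "?y \<notin> T" using sle j0 True by fastforce
    have xb: "belowof T ?x" using sT i0 by (auto simp: belowof_def)
    have xr: "rightof T ?x" using xb good_rightbelow[OF g xT] by simp
    have x1: "?x \<noteq> (1,1)" using True k2 by auto
    have ex': "excl ?T'"
    proof (rule excl_ir)
      fix a b assume p: "(a,b) \<in> ?T'" "(a,b) \<noteq> (1,1)"
      show "has_above ?T' (a,b) \<noteq> has_left ?T' (a,b)"
      proof (cases "(a,b) = ?y")
        case True
        have "has_above ?T' (a,b)" using colabove True \<open>k < s\<close> j0 by (fastforce simp: ha_ir)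
        moreover have "\<not> has_left ?T' (a,b)" using True sle j0 \<open>k < s\<close> by (fastforce simp: hl_ir)
        ultimately show ?thesis by simp
      next
        case ny: False
        then have pT: "(a,b) \<in> T" "(a,b) \<noteq> ?x" using p by auto
        show ?thesis
        proof (cases "(a,b) = (k,s)")
          case True
          have "\<not> has_above ?T' (a,b)" using True F1r \<open>k < s\<close> j0 by (fastforce simp: ha_ir)
          moreover have "has_left ?T' (a,b)" using True j0 \<open>k < s\<close> by (simp add: hl_ir)
          ultimately show ?thesis by simp
        next
          case nf: False
          have A: "has_above ?T' (a,b) \<longleftrightarrow> has_above T (a,b)"
          proof
            assume "has_above ?T' (a,b)"
            then consider (a1) i1 where "i1 < a" "(i1,b) \<in> T" | (a2) "j0 = b" "k < a"
              by (auto simp: ha_ir)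
            then show "has_above T (a,b)"
            proof cases
              case a1 then show ?thesis by (auto simp: has_above_def)
            next
              case a2
              obtain i2 where "i2 < k" "(i2,j0) \<in> T" using colabove by blast
              then show ?thesis using a2 by (auto simp: has_above_def intro!: exI[of _ i2])
            qed
          next
            assume "has_above T (a,b)"
            then obtain i1 where i1: "i1 < a" "(i1,b) \<in> T" by (auto simp: has_above_def)
            show "has_above ?T' (a,b)"
            proof (cases "(i1,b) = ?x")
              case False then show ?thesis using i1 by (auto simp: ha_ir)
            next
              case True
              then have bs: "b = s" "i1 = i0" by auto
              have "k < a"
              proof -
                have "\<not> a < k" using F1r[OF pT(1)] pT(2) bs \<open>k < s\<close> by auto
                moreover have "a \<noteq> k" using nf bs by auto
                ultimately show ?thesis by simp
              qed
              then show ?thesis using sT bs i0 by (auto simp: ha_ir intro!: exI[of _ k])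
            qed
          qed
          have L: "has_left ?T' (a,b) \<longleftrightarrow> has_left T (a,b)"
          proof
            assume "has_left ?T' (a,b)"
            then consider (a1) j1 where "j1 < b" "(a,j1) \<in> T" | (a2) "k = a" "j0 < b"
              by (auto simp: hl_ir)
            then show "has_left T (a,b)"
            proof cases
              case a1 then show ?thesis by (auto simp: has_left_def)
            next
              case a2
              then have "s \<le> b" using sle pT by auto
              moreover have "b \<noteq> s" using nf a2 by auto
              ultimately show ?thesis using a2 sT by (auto simp: has_left_def intro!: exI[of _ s])
            qed
          next
            assume "has_left T (a,b)"
            then obtain j1 where j1: "j1 < b" "(a,j1) \<in> T" by (auto simp: has_left_def)
            show "has_left ?T' (a,b)"
            proof (cases "(a,j1) = ?x")
              case False then show ?thesis using j1 by (auto simp: hl_ir)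
            next
              case True
              obtain c where c: "c < k" "(i0,c) \<in> T" using rowleft by blast
              then show ?thesis using True j1 \<open>k < s\<close> by (auto simp: hl_ir intro!: exI[of _ c])
            qed
          qed
          show ?thesis using A L good_excl[OF g pT(1) p(2)] by simp
        qed
      qed
    qed
    have gm: "good n ?T' P"
      by (rule move[OF g xT yT _ _ _ _ x1 xr xb, of s ij0])
         (use kn j0 sT \<open>k < s\<close> i0 ij0 ex' in auto)
    moreover have "?x \<notin> ?T'" using i0 by auto
    then have "?T' \<noteq> T" using xT by blast
    ultimately show ?thesis by blast
  next
    case nks: False
    show ?thesis
    proof (cases "s = k")
      case True
      obtain i' where i': "i' < k" "(i',k) \<in> T" using sabove True by blast
      have "i' = i0" using F1r[OF i'(2) i'(1)] by auto
      then have i0k: "(i0,k) \<in> T" using i' by simp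
      let ?x = "(k,k)" and ?y = "(k,j0)"
      let ?T' = "insert ?y (T - {?x})"
      have xT: "?x \<in> T" using sT True by simp
      have yT: "?y \<notin> T" using sle j0 True by fastforce
      have xr: "rightof T ?x" using jk by (auto simp: rightof_def)
      have xb: "belowof T ?x" using xr good_rightbelow[OF g xT] by simp
      have x1: "?x \<noteq> (1,1)" using k2 by auto
      have ex': "excl ?T'"
      proof (rule excl_ir)
        fix a b assume p: "(a,b) \<in> ?T'" "(a,b) \<noteq> (1,1)"
        show "has_above ?T' (a,b) \<noteq> has_left ?T' (a,b)"
        proof (cases "(a,b) = ?y")
          case True
          have "has_above ?T' (a,b)" using colabove True j0 by (fastforce simp: ha_ir)
          moreover have "\<not> has_left ?T' (a,b)" using True sle j0 \<open>s = k\<close> by (fastforce simp: hl_ir)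
          ultimately show ?thesis by simp
        next
          case ny: False
          then have pT: "(a,b) \<in> T" "(a,b) \<noteq> ?x" using p by auto
          have A: "has_above ?T' (a,b) \<longleftrightarrow> has_above T (a,b)"
          proof
            assume "has_above ?T' (a,b)"
            then consider (a1) i1 where "i1 < a" "(i1,b) \<in> T" | (a2) "j0 = b" "k < a"
              by (auto simp: ha_ir)
            then show "has_above T (a,b)"
            proof cases
              case a1 then show ?thesis by (auto simp: has_above_def)
            next
              case a2
              obtain i2 where "i2 < k" "(i2,j0) \<in> T" using colabove by blast
              then show ?thesis using a2 by (auto simp: has_above_def intro!: exI[of _ i2])
            qed
          next
            assume "has_above T (a,b)"
            then obtain i1 where i1: "i1 < a" "(i1,b) \<in> T" by (auto simp: has_above_def)
            show "has_above ?T' (a,b)"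
            proof (cases "(i1,b) = ?x")
              case False then show ?thesis using i1 by (auto simp: ha_ir)
            next
              case True
              then show ?thesis using i0k i0 i1 by (auto simp: ha_ir intro!: exI[of _ i0])
            qed
          qed
          have L: "has_left ?T' (a,b) \<longleftrightarrow> has_left T (a,b)"
          proof
            assume "has_left ?T' (a,b)"
            then consider (a1) j1 where "j1 < b" "(a,j1) \<in> T" | (a2) "k = a" "j0 < b"
              by (auto simp: hl_ir)
            then show "has_left T (a,b)"
            proof cases
              case a1 then show ?thesis by (auto simp: has_left_def)
            next
              case a2
              then have "k \<le> b" using sle pT \<open>s = k\<close> by auto
              moreover have "b \<noteq> k" using pT a2 by auto
              ultimately show ?thesis using a2 xT by (auto simp: has_left_def intro!: exI[of _ k])
            qed
          next
            assume "has_left T (a,b)"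
            then obtain j1 where j1: "j1 < b" "(a,j1) \<in> T" by (auto simp: has_left_def)
            show "has_left ?T' (a,b)"
            proof (cases "(a,j1) = ?x")
              case False then show ?thesis using j1 by (auto simp: hl_ir)
            next
              case True
              then show ?thesis using j1 j0 by (auto simp: hl_ir)
            qed
          qed
          show ?thesis using A L good_excl[OF g pT(1) p(2)] by simp
        qed
      qed
      have gm: "good n ?T' P"
        by (rule move[OF g xT yT _ _ _ _ x1 xr xb, of jk ij0])
           (use kn j0 jk ij0 ex' in auto)
      moreover have "?x \<notin> ?T'" using j0 by auto
      then have "?T' \<noteq> T" using xT by blast
      ultimately show ?thesis by blast
    next
      case False
      then have sk: "s < k" and tk: "t < k" using nks cs' by auto
      have "s = j0" using F1c[OF sT sk] by auto
      then have xT: "(k,j0) \<in> T" using sT by simp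
      have "t = i0" using F1r[OF tT tk] by auto
      then have i0k: "(i0,k) \<in> T" using tT by simp
      let ?x = "(k,j0)" and ?y = "(k,k)"
      let ?T' = "insert ?y (T - {?x})"
      have rowk_small: "\<And>j. (k,j) \<in> T \<Longrightarrow> j < k \<Longrightarrow> j = j0" using F1c by fastforce
      have yT: "?y \<notin> T"
      proof
        assume yT: "?y \<in> T"
        have "has_above T ?y" using i0k i0 by (auto simp: has_above_def)
        moreover have "has_left T ?y" using xT j0 by (auto simp: has_left_def)
        ultimately show False using good_excl[OF g yT] k2 by auto
      qed
      have xr: "rightof T ?x" using jk j0 by (auto simp: rightof_def intro!: exI[of _ jk])
      have xb: "belowof T ?x" using xr good_rightbelow[OF g xT] by simp
      have x1: "?x \<noteq> (1,1)" using k2 by auto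
      have xabove: "\<exists>i'<k. (i',j0) \<in> T"
        by (rule first_above[OF g xT x1]) (use sle \<open>s = j0\<close> in fastforce)
      have ex': "excl ?T'"
      proof (rule excl_ir)
        fix a b assume p: "(a,b) \<in> ?T'" "(a,b) \<noteq> (1,1)"
        show "has_above ?T' (a,b) \<noteq> has_left ?T' (a,b)"
        proof (cases "(a,b) = ?y")
          case True
          have "has_above ?T' (a,b)" using i0k True i0 by (fastforce simp: ha_ir)
          moreover have "\<not> has_left ?T' (a,b)" using True rowk_small by (fastforce simp: hl_ir)
          ultimately show ?thesis by simp
        next
          case ny: False
          then have pT: "(a,b) \<in> T" "(a,b) \<noteq> ?x" using p by auto
          have A: "has_above ?T' (a,b) \<longleftrightarrow> has_above T (a,b)"
          proof
            assume "has_above ?T' (a,b)"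
            then consider (a1) i1 where "i1 < a" "(i1,b) \<in> T" | (a2) "k = b" "k < a"
              by (auto simp: ha_ir)
            then show "has_above T (a,b)"
            proof cases
              case a1 then show ?thesis by (auto simp: has_above_def)
            next
              case a2
              then show ?thesis using i0k i0 by (auto simp: has_above_def intro!: exI[of _ i0])
            qed
          next
            assume "has_above T (a,b)"
            then obtain i1 where i1: "i1 < a" "(i1,b) \<in> T" by (auto simp: has_above_def)
            show "has_above ?T' (a,b)"
            proof (cases "(i1,b) = ?x")
              case False then show ?thesis using i1 by (auto simp: ha_ir)
            next
              case True
              obtain i2 where "i2 < k" "(i2,j0) \<in> T" using xabove by blast
              then show ?thesis using True i1 by (auto simp: ha_ir intro!: exI[of _ i2])
            qed
          qed
          have L: "has_left ?T' (a,b) \<longleftrightarrow> has_left T (a,b)"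
          proof
            assume "has_left ?T' (a,b)"
            then consider (a1) j1 where "j1 < b" "(a,j1) \<in> T" | (a2) "k = a" "k < b"
              by (auto simp: hl_ir)
            then show "has_left T (a,b)"
            proof cases
              case a1 then show ?thesis by (auto simp: has_left_def)
            next
              case a2
              then show ?thesis using xT j0 by (auto simp: has_left_def intro!: exI[of _ j0])
            qed
          next
            assume "has_left T (a,b)"
            then obtain j1 where j1: "j1 < b" "(a,j1) \<in> T" by (auto simp: has_left_def)
            show "has_left ?T' (a,b)"
            proof (cases "(a,j1) = ?x")
              case False then show ?thesis using j1 by (auto simp: hl_ir)
            next
              case True
              have "b \<noteq> k" using ny True yT pT by auto
              moreover have "\<not> b < k" using rowk_small[of b] pT True by auto
              ultimately have "k < b" by simp
              then show ?thesis using True by (auto simp: hl_ir)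
            qed
          qed
          show ?thesis using A L good_excl[OF g pT(1) p(2)] by simp
        qed
      qed
      have gm: "good n ?T' P"
        by (rule move[OF g xT yT _ _ _ _ x1 xr xb, of jk ik])
           (use kn k2 jk ik j0 ex' in auto)
      moreover have "?x \<notin> ?T'" using j0 by auto
      then have "?T' \<noteq> T" using xT by blast
      ultimately show ?thesis by blast
    qed
  qed
qed



definition Q :: "nat \<Rightarrow> (nat \<times> nat) set" where "Q m = {1..m} \<times> {1..m}"

lemma Q_split: "1 \<le> m \<Longrightarrow> Q m = Q (m-1) \<union> L_subset m"
  by (auto simp: Q_def L_subset_def)
lemma Q_disj: "Q (m-1) \<inter> L_subset m = {}"
  by (auto simp: Q_def L_subset_def)

lemma a_step:
  assumes "finite P" "1 \<le> m"
  shows "card (P \<inter> Q m) = card (P \<inter> Q (m-1)) + card (P \<inter> L_subset m)"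
proof -
  have "P \<inter> Q m = (P \<inter> Q (m-1)) \<union> (P \<inter> L_subset m)" using Q_split[OF assms(2)] by auto
  moreover have "(P \<inter> Q (m-1)) \<inter> (P \<inter> L_subset m) = {}" using Q_disj[of m] by auto
  ultimately show ?thesis using assms(1) by (simp add: card_Un_disjoint)
qed

lemma tr_Q: "tr (Q m) = Q m" by (auto simp: Q_def)

lemma good_finP: "good n T P \<Longrightarrow> finite P"
  using good_fin good_PT by (meson finite_subset subsetI)

lemma count_prefix:
  assumes g: "good n T P" and n2: "2 \<le> n"
    and minm: "\<And>m. 2 \<le> m \<Longrightarrow> m < k \<Longrightarrow> card (P \<inter> L_subset m) = 1"
  shows "1 \<le> m \<Longrightarrow> m < k \<Longrightarrow> card (P \<inter> Q m) = m - 1"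
proof (induction m rule: nat_induct_at_least)
  case base
  have "P \<inter> Q 1 = {}" using root_notP[OF g n2] by (auto simp: Q_def)
  then show ?case by simp
next
  case (Suc m)
  have "card (P \<inter> Q (Suc m)) = card (P \<inter> Q m) + card (P \<inter> L_subset (Suc m))"
    using a_step[OF good_finP[OF g], of "Suc m"] by simp
  also have "\<dots> = (m - 1) + 1" using Suc minm[of "Suc m"] by simp
  finally show ?case using Suc by simp
qed

lemma row_escape:
  assumes g: "good n T P" and k2: "2 \<le> k" and kn: "k \<le> n"
    and c: "card (P \<inter> Q (k-1)) = k - 2"
  shows "\<exists>i0. 1 \<le> i0 \<and> i0 < k \<and> (\<forall>j. (i0,j) \<in> P \<longrightarrow> k \<le> j) \<and>
           (\<forall>i j. (i,j) \<in> T \<longrightarrow> i < k \<longrightarrow> i \<noteq> i0 \<longrightarrow> j < k)"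
proof -
  let ?S = "P \<inter> Q (k-1)"
  let ?R = "fst ` ?S"
  have inj: "inj_on fst ?S"
    by (rule inj_onI) (metis IntD1 good_P_uniq_row[OF g] prod.collapse)
  have cR: "card ?R = k - 2" using card_image[OF inj] c by simp
  have Rsub: "?R \<subseteq> {1..k-1}" by (auto simp: Q_def)
  let ?E = "{1..k-1} - ?R"
  have cE: "card ?E = 1" using card_Diff_subset[OF finite_subset[OF Rsub] Rsub] cR k2 by simp
  then obtain i0 where E: "?E = {i0}" by (rule card_1_singletonE)
  have i0E: "i0 \<in> ?E" using E by blast
  have i0: "1 \<le> i0" "i0 < k" "i0 \<notin> ?R" using i0E k2 by auto
  have A: "\<forall>j. (i0,j) \<in> P \<longrightarrow> k \<le> j"
  proof (intro allI impI)
    fix j assume j: "(i0,j) \<in> P"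
    have "1 \<le> j" using good_grid[OF g] good_PT[OF g j] by blast
    show "k \<le> j"
    proof (rule ccontr)
      assume "\<not> k \<le> j"
      then have "(i0,j) \<in> ?S" using j \<open>1 \<le> j\<close> i0 by (auto simp: Q_def)
      then have "i0 \<in> ?R" by force
      with i0 show False by simp
    qed
  qed
  have B: "\<forall>i j. (i,j) \<in> T \<longrightarrow> i < k \<longrightarrow> i \<noteq> i0 \<longrightarrow> j < k"
  proof (intro allI impI)
    fix i j assume ij: "(i,j) \<in> T" "i < k" "i \<noteq> i0"
    have "1 \<le> i" using good_grid[OF g ij(1)] by simp
    then have "i \<notin> ?E" using E ij by auto
    then have "i \<in> ?R" using \<open>1 \<le> i\<close> ij by auto
    then obtain j' where j': "(i,j') \<in> P" "j' \<le> k - 1" by (force simp: Q_def)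
    have "j \<le> j'" by (rule row_last[OF g ij(1) j'(1)])
    then show "j < k" using j' k2 by simp
  qed
  show ?thesis using i0 A B by blast
qed

lemma exists_other:
  assumes g: "good n T P" and n2: "2 \<le> n" and k2: "2 \<le> k" and kn: "k + 1 \<le> n"
    and fail: "card (P \<inter> L_subset k) \<noteq> 1"
    and minm: "\<And>m. 2 \<le> m \<Longrightarrow> m < k \<Longrightarrow> card (P \<inter> L_subset m) = 1"
  shows "\<exists>T'. good n T' P \<and> T' \<noteq> T"
proof -
  have c: "card (P \<inter> Q (k-1)) = k - 2"
    using count_prefix[OF g n2, where k=k and m="k-1"] minm k2 by simp
  obtain i0 where i0: "1 \<le> i0" "i0 < k" and i0l': "\<And>j. (i0,j) \<in> P \<Longrightarrow> k \<le> j"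
    and F1r: "\<And>i j. (i,j) \<in> T \<Longrightarrow> i < k \<Longrightarrow> i \<noteq> i0 \<Longrightarrow> j < k"
    using row_escape[OF g k2 _ c] kn by auto
  have gt: "good n (tr T) (tr P)" by (rule good_tr[OF g])
  have ct: "card (tr P \<inter> Q (k-1)) = k - 2"
    using c by (metis card_tr tr_Int tr_Q)
  obtain j0 where j0: "1 \<le> j0" "j0 < k" and j0l'': "\<And>i. (j0,i) \<in> tr P \<Longrightarrow> k \<le> i"
    and F1c': "\<And>i j. (i,j) \<in> tr T \<Longrightarrow> i < k \<Longrightarrow> i \<noteq> j0 \<Longrightarrow> j < k"
    using row_escape[OF gt k2 _ ct] kn by (auto simp del: mem_tr)
  have j0l': "\<And>i. (i,j0) \<in> P \<Longrightarrow> k \<le> i" using j0l'' by simp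
  have F1c: "\<And>i j. (i,j) \<in> T \<Longrightarrow> j < k \<Longrightarrow> j \<noteq> j0 \<Longrightarrow> i < k" using F1c' by simp
  obtain jk where jkP: "(k,jk) \<in> P" using good_P_row[OF g, of k] k2 kn by auto
  obtain ik where ikP: "(ik,k) \<in> P" using good_P_col[OF g, of k] k2 kn by auto
  have jkT: "(k,jk) \<in> T" using good_PT[OF g jkP] by simp
  have ikT: "(ik,k) \<in> T" using good_PT[OF g ikP] by simp
  have jk1: "1 \<le> jk" using good_grid[OF g jkT] by simp
  have ik1: "1 \<le> ik" using good_grid[OF g ikT] by simp
  have urow: "\<And>a b b'. (a,b) \<in> P \<Longrightarrow> (a,b') \<in> P \<Longrightarrow> b = b'" using good_P_uniq_row[OF g] by blast
  have ucol: "\<And>a a' b. (a,b) \<in> P \<Longrightarrow> (a',b) \<in> P \<Longrightarrow> a = a'" using good_P_uniq_col[OF g] by blast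
  have jk_ne: "jk \<noteq> k"
  proof
    assume "jk = k"
    then have "P \<inter> L_subset k = {(k,k)}" using jkP urow ucol k2 by (auto simp: L_subset_def)
    with fail show False by simp
  qed
  have ik_ne: "ik \<noteq> k"
  proof
    assume "ik = k"
    then have "P \<inter> L_subset k = {(k,k)}" using ikP urow ucol k2 by (auto simp: L_subset_def)
    with fail show False by simp
  qed
  have both: "k < jk \<and> k < ik"
  proof (rule ccontr)
    assume nb: "\<not> (k < jk \<and> k < ik)"
    consider (c1) "jk < k" "k < ik" | (c2) "k < jk" "ik < k" | (c3) "jk < k" "ik < k"
      using nb jk_ne ik_ne by linarith
    then show False
    proof cases
      case c1
      have "P \<inter> L_subset k = {(k,jk)}" using c1 jkP ikP urow ucol k2 jk1
        by (auto simp: L_subset_def) (metis less_le_not_le)+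
      with fail show False by simp
    next
      case c2
      have "P \<inter> L_subset k = {(ik,k)}" using c2 jkP ikP urow ucol k2 ik1
        by (auto simp: L_subset_def) (metis less_le_not_le)+
      with fail show False by simp
    next
      case c3
      have "ik = i0" using F1r[OF ikT c3(2)] by auto
      then have i0k: "(i0,k) \<in> P" using ikP by simp
      have "jk = j0" using F1c[OF jkT c3(1)] by auto
      then have kj0: "(k,j0) \<in> P" using jkP by simp
      have "(k+1) \<in> {1..n}" using kn by simp
      then obtain c0 where "(k+1,c0) \<in> T" using g unfolding good_def cnm'_def by blast
      let ?L = "\<lambda>c. (k+1,c) \<in> T"
      have fT: "(k+1, Least ?L) \<in> T" by (rule LeastI[of ?L c0]) fact
      have f1: "(k+1, Least ?L) \<noteq> (1,1)" using k2 by simp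
      obtain i' where i': "i' < k+1" "(i', Least ?L) \<in> T"
        using first_above[OF g fT f1] not_less_Least by blast
      have cle: "Least ?L \<le> k"
      proof (cases "i' = k")
        case True then show ?thesis using row_last[OF g _ jkP] i' c3 by fastforce
      next
        case False
        then have "i' < k" using i' by simp
        show ?thesis
        proof (cases "i' = i0")
          case True then show ?thesis using row_last[OF g _ i0k] i' by fastforce
        next
          case False then show ?thesis using F1r[OF i'(2) \<open>i' < k\<close>] by simp
        qed
      qed
      show False
      proof (cases "Least ?L = k")
        case True
        then show False using col_last[OF g _ i0k] fT i0 by fastforce
      next
        case False
        then have "Least ?L < k" using cle by simp
        show False
        proof (cases "Least ?L = j0")
          case True then show False using col_last[OF g _ kj0] fT by fastforce
        next
          case False then show False using F1c[OF fT \<open>Least ?L < k\<close>] by simp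
        qed
      qed
    qed
  qed
  have rowk: "\<And>j. (k,j) \<in> P \<Longrightarrow> k < j" using both jkP urow by blast
  have colk: "\<And>i. (i,k) \<in> P \<Longrightarrow> k < i" using both ikP ucol by blast
  have i0l: "\<And>j. (i0,j) \<in> P \<Longrightarrow> k < j"
  proof -
    fix j assume j: "(i0,j) \<in> P"
    have "j \<noteq> k" using colk[of i0] j i0 by auto
    then show "k < j" using i0l'[OF j] by simp
  qed
  have j0l: "\<And>i. (i,j0) \<in> P \<Longrightarrow> k < i"
  proof -
    fix i assume i: "(i,j0) \<in> P"
    have "i \<noteq> k" using rowk[of j0] i j0 by auto
    then show "k < i" using j0l'[OF i] by simp
  qed
  have kn': "k \<le> n" using kn by simp
  show ?thesis
  proof (cases "k \<le> (LEAST j. (k,j) \<in> T) \<or> ((LEAST j. (k,j) \<in> T) < k \<and> (LEAST i. (i,k) \<in> T) < k)")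
    case True
    show ?thesis by (rule half[OF g k2 kn' i0 j0 F1r F1c rowk colk i0l j0l True])
  next
    case False
    then have cs: "k \<le> (LEAST i. (i,k) \<in> T)" by auto
    have cs': "k \<le> (LEAST j. (k,j) \<in> tr T) \<or> ((LEAST j. (k,j) \<in> tr T) < k \<and> (LEAST i. (i,k) \<in> tr T) < k)"
      using cs by simp
    have "\<exists>T'. good n T' (tr P) \<and> T' \<noteq> tr T"
      by (rule half[OF gt k2 kn' j0 i0 _ _ _ _ _ _ cs'])
         (use F1c F1r colk rowk j0l i0l in auto)
    then obtain T'' where T'': "good n T'' (tr P)" "T'' \<noteq> tr T" by blast
    have "good n (tr T'') P" using good_tr[OF T''(1)] by simp
    moreover have "tr T'' \<noteq> T" using T''(2) by auto
    ultimately show ?thesis by blast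
  qed
qed


theorem lemma3p3:
  fixes n :: nat and P :: "(nat \<times> nat) set"
  assumes "n \<ge> 2"
    and "is_perm_matrix n P"
    and "\<exists>!T. is_CNM n T \<and> leaf_matrix T = P"
  shows "\<forall>k. 2 \<le> k \<and> k \<le> n - 1 \<longrightarrow> card (P \<inter> L_subset k) = 1"
proof (rule ccontr)
  assume "\<not> (\<forall>k. 2 \<le> k \<and> k \<le> n - 1 \<longrightarrow> card (P \<inter> L_subset k) = 1)"
  then obtain k0 where k0: "2 \<le> k0 \<and> k0 \<le> n - 1 \<and> card (P \<inter> L_subset k0) \<noteq> 1" by blast
  let ?F = "\<lambda>k. 2 \<le> k \<and> k \<le> n - 1 \<and> card (P \<inter> L_subset k) \<noteq> 1"
  define k where "k = (LEAST k. ?F k)"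
  have kF: "?F k" unfolding k_def by (rule LeastI[of ?F k0]) (rule k0)
  have minm: "\<And>m. 2 \<le> m \<Longrightarrow> m < k \<Longrightarrow> card (P \<inter> L_subset m) = 1"
  proof -
    fix m assume m: "2 \<le> m" "m < k"
    have "\<not> ?F m" using not_less_Least[of m ?F] m(2) unfolding k_def by blast
    then show "card (P \<inter> L_subset m) = 1" using m kF by auto
  qed
  obtain T where T: "is_CNM n T" "leaf_matrix T = P"
    and uq: "\<And>T'. is_CNM n T' \<and> leaf_matrix T' = P \<Longrightarrow> T' = T"
    using assms(3) by blast
  have c: "cnm' n T" using T(1) cnm_iff by blast
  have g: "good n T P" using c T(2) leaf_eq[OF c] assms(2) by (simp add: good_def leaves_def)
  have kn: "k + 1 \<le> n" using kF assms(1) by auto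
  obtain T' where T': "good n T' P" "T' \<noteq> T"
    using exists_other[OF g assms(1) _ kn _ minm] kF by blast
  have c': "cnm' n T'" using T'(1) by (simp add: good_def)
  have "is_CNM n T'" using c' cnm_iff by blast
  moreover have "leaf_matrix T' = P" using leaf_eq[OF c'] T'(1) by (simp add: good_def leaves_def)
  ultimately have "T' = T" using uq by blast
  with T'(2) show False by simp
qed

end
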